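(* For every admissible triple $(j_1,j_2,j_3)\in\mathbf J$, the top total-degree part of the Laurent polynomial $\phi_{j_1,j_2,j_3}$ (total degree of $x_{12}^{a}x_{13}^{b}x_{23}^{c}$ being $a+b+c$) has total degree $(j_1+j_2+j_3)/2$ and consists of a single monomial $c\,x_{12}^{d_3}x_{13}^{d_2}x_{23}^{d_1}$ with $c\in\mathbb C\setminus\{0\}$, where $$d_1=\frac{-j_1+j_2+j_3}{2},\quad d_2=\frac{j_1-j_2+j_3}{2},\quad d_3=\frac{j_1+j_2-j_3}{2}.$$
   Context: A triple $(j_1,j_2,j_3)$ of nonnegative integers is admissible if $|j_1-j_2|\le j_3\le j_1+j_2$ and $j_1+j_2+j_3$ is even; $\mathbf J$ denotes the set of admissible triples. Let $\mathcal H=\mathbb C[x_{12}+x_{12}^{-1},x_{13}+x_{13}^{-1},x_{23}+x_{23}^{-1}]\subset\mathbb C[x_{12}^{\pm1},x_{13}^{\pm1},x_{23}^{\pm1}]$. For $a,b\in\{\pm1\}$ set $K_{a,b}(j_1,j_2,j_3)=ab\,\frac{(aj_1+bj_2+j_3+a+b+2)(aj_1+bj_2-j_3+a+b)}{4(j_1+1)(j_2+1)}$. The genus two Schur polynomials $(\phi_{j_1,j_2,j_3})_{(j_1,j_2,j_3)\in\mathbf J}$ are the unique family in $\mathcal H$ with $\phi_{0,0,0}=1$ such that for all admissible $(j_1,j_2,j_3)$: $(x_{12}+x_{12}^{-1})\phi_{j_1,j_2,j_3}=\sum_{a,b\in\{\pm1\}}K_{a,b}(j_1,j_2,j_3)\phi_{j_1+a,j_2+b,j_3}$,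 $(x_{13}+x_{13}^{-1})\phi_{j_1,j_2,j_3}=\sum_{a,b\in\{\pm1\}}K_{a,b}(j_1,j_3,j_2)\phi_{j_1+a,j_2,j_3+b}$, $(x_{23}+x_{23}^{-1})\phi_{j_1,j_2,j_3}=\sum_{a,b\in\{\pm1\}}K_{a,b}(j_2,j_3,j_1)\phi_{j_1,j_2+a,j_3+b}$, where $\phi$ of a non-admissible triple is interpreted as $0$. *)

theory Defs
  imports Complex_Main "HOL-Library.Poly_Mapping" "HOL-Library.Product_Plus"
begin

text \<open>Laurent polynomials in x12, x13, x23 over the complex numbers:
  finitely supported maps from exponent triples (a,b,c) (for x12^a x13^b x23^c)
  to coefficients, with convolution product.\<close>
type_synonym lpoly = "(int \<times> int \<times> int) \<Rightarrow>\<^sub>0 complex"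

definition lmono :: "int \<Rightarrow> int \<Rightarrow> int \<Rightarrow> complex \<Rightarrow> lpoly" where
  "lmono a b c k = Poly_Mapping.single (a, b, c) k"

definition lconst :: "complex \<Rightarrow> lpoly" where
  "lconst k = lmono 0 0 0 k"

definition y12 :: lpoly where "y12 = lmono 1 0 0 1 + lmono (-1) 0 0 1"
definition y13 :: lpoly where "y13 = lmono 0 1 0 1 + lmono 0 (-1) 0 1"
definition y23 :: lpoly where "y23 = lmono 0 0 1 1 + lmono 0 0 (-1) 1"

inductive_set H :: "lpoly set" where
  H_const: "lconst k \<in> H"
| H_y12: "y12 \<in> H"
| H_y13: "y13 \<in> H"
| H_y23: "y23 \<in> H"
| H_add: "p \<in> H \<Longrightarrow> q \<in> H \<Longrightarrow> p + q \<in> H"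
| H_mult: "p \<in> H \<Longrightarrow> q \<in> H \<Longrightarrow> p * q \<in> H"

definition admissible :: "int \<Rightarrow> int \<Rightarrow> int \<Rightarrow> bool" where
  "admissible j1 j2 j3 \<longleftrightarrow> 0 \<le> j1 \<and> 0 \<le> j2 \<and> 0 \<le> j3 \<and>
     \<bar>j1 - j2\<bar> \<le> j3 \<and> j3 \<le> j1 + j2 \<and> even (j1 + j2 + j3)"

definition K :: "int \<Rightarrow> int \<Rightarrow> int \<Rightarrow> int \<Rightarrow> int \<Rightarrow> complex" where
  "K a b j1 j2 j3 = of_int (a * b) *
     (of_int (a*j1 + b*j2 + j3 + a + b + 2) * of_int (a*j1 + b*j2 - j3 + a + b))
     / (4 * of_int (j1 + 1) * of_int (j2 + 1))"

definition schur_family :: "(int \<Rightarrow> int \<Rightarrow> int \<Rightarrow> lpoly) \<Rightarrow> bool" where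
  "schur_family phi \<longleftrightarrow>
     phi 0 0 0 = 1 \<and>
     (\<forall>j1 j2 j3. admissible j1 j2 j3 \<longrightarrow> phi j1 j2 j3 \<in> H) \<and>
     (\<forall>j1 j2 j3. \<not> admissible j1 j2 j3 \<longrightarrow> phi j1 j2 j3 = 0) \<and>
     (\<forall>j1 j2 j3. admissible j1 j2 j3 \<longrightarrow>
        y12 * phi j1 j2 j3 =
          (\<Sum>a\<in>{-1,1}. \<Sum>b\<in>{-1,1}. lconst (K a b j1 j2 j3) * phi (j1+a) (j2+b) j3) \<and>
        y13 * phi j1 j2 j3 =
          (\<Sum>a\<in>{-1,1}. \<Sum>b\<in>{-1,1}. lconst (K a b j1 j3 j2) * phi (j1+a) j2 (j3+b)) \<and>
        y23 * phi j1 j2 j3 =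
          (\<Sum>a\<in>{-1,1}. \<Sum>b\<in>{-1,1}. lconst (K a b j2 j3 j1) * phi j1 (j2+a) (j3+b)))"

end

theory Submission
  imports Defs
begin

lemma lookup_single_mult:
  fixes p :: lpoly
  shows "Poly_Mapping.lookup (Poly_Mapping.single e c * p) k = c * Poly_Mapping.lookup p (k - e)"
proof -
  have "Poly_Mapping.lookup (Poly_Mapping.single e c * p) k
     = (\<Sum>l. (c when e = l) * (\<Sum>q. Poly_Mapping.lookup p q when k = l + q))"
    by (simp add: lookup_mult lookup_single)
  also have "\<dots> = (\<Sum>l. (c * (\<Sum>q. Poly_Mapping.lookup p q when k = l + q)) when e = l)"
    by (simp add: when_mult)
  also have "\<dots> = c * (\<Sum>q. Poly_Mapping.lookup p q when k = e + q)" by simp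
  also have "(\<Sum>q. Poly_Mapping.lookup p q when k = e + q) = (\<Sum>q. Poly_Mapping.lookup p q when q = k - e)"
    by (rule Sum_any.cong) (auto intro: when_cong)
  also have "\<dots> = Poly_Mapping.lookup p (k - e)" by simp
  finally show ?thesis .
qed

definition tot :: "int \<times> int \<times> int \<Rightarrow> int" where
  "tot k = fst k + fst (snd k) + snd (snd k)"

lemma tot_diff: "tot (k - e) = tot k - tot e"
  by (cases k; cases e) (simp add: tot_def)

lemma tot_add: "tot (k + e) = tot k + tot e"
  by (cases k; cases e) (simp add: tot_def)

lemma diff_zero3 [simp]: "k - ((0::int), (0::int), (0::int)) = k"
  by (cases k) simp

lemma keys_lconst_mult: "Poly_Mapping.keys (lconst c * p) \<subseteq> Poly_Mapping.keys p"
proof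
  fix k assume "k \<in> Poly_Mapping.keys (lconst c * p)"
  hence "Poly_Mapping.lookup (lconst c * p) k \<noteq> 0" by (simp add: in_keys_iff)
  hence "c * Poly_Mapping.lookup p k \<noteq> 0"
    by (simp add: lconst_def lmono_def lookup_single_mult)
  thus "k \<in> Poly_Mapping.keys p" by (simp add: in_keys_iff)
qed

lemma stepG:
  fixes p q r :: lpoly and e m :: "int \<times> int \<times> int" and s :: int and K :: complex
  assumes te: "tot e = 1"
    and y: "y = Poly_Mapping.single e 1 + Poly_Mapping.single (-e) 1"
    and eq: "y * q = lconst K * p + r"
    and qm: "Poly_Mapping.lookup q m \<noteq> 0" and tm: "tot m = s"
    and qk: "\<forall>k\<in>Poly_Mapping.keys q. tot k \<le> s \<and> (tot k = s \<longrightarrow> k = m)"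
    and rk: "\<forall>k\<in>Poly_Mapping.keys r. tot k \<le> s"
    and K0: "K \<noteq> 0"
  shows "Poly_Mapping.lookup p (m + e) \<noteq> 0 \<and>
    (\<forall>k\<in>Poly_Mapping.keys p. tot k \<le> s + 1 \<and> (tot k = s + 1 \<longrightarrow> k = m + e))"
proof -
  have L: "K * Poly_Mapping.lookup p k =
      Poly_Mapping.lookup q (k - e) + Poly_Mapping.lookup q (k + e) - Poly_Mapping.lookup r k" for k
  proof -
    have "Poly_Mapping.lookup (y * q) k = Poly_Mapping.lookup (lconst K * p + r) k" using eq by simp
    thus ?thesis
      by (simp add: y distrib_right lookup_add lookup_single_mult lconst_def lmono_def)
  qed
  have q0: "Poly_Mapping.lookup q k = 0" if "tot k > s" for k
    using qk that by (meson in_keys_iff not_le)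
  have q1: "Poly_Mapping.lookup q k = 0" if "tot k = s" "k \<noteq> m" for k
    by (metis in_keys_iff qk that)
  have r0: "Poly_Mapping.lookup r k = 0" if "tot k > s" for k
    using rk that by (meson in_keys_iff not_le)
  have A: "Poly_Mapping.lookup p (m + e) \<noteq> 0"
  proof -
    have "K * Poly_Mapping.lookup p (m + e) = Poly_Mapping.lookup q m"
      using L[of "m+e"] q0[of "m+e+e"] r0[of "m+e"] te tm by (simp add: tot_add)
    thus ?thesis using qm by auto
  qed
  have B: "tot k \<le> s + 1 \<and> (tot k = s + 1 \<longrightarrow> k = m + e)" if "k \<in> Poly_Mapping.keys p" for k
  proof -
    have pk: "Poly_Mapping.lookup p k \<noteq> 0" using that by (simp add: in_keys_iff)
    have "\<not> tot k > s + 1"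
    proof
      assume "tot k > s + 1"
      hence "K * Poly_Mapping.lookup p k = 0"
        using L[of k] q0[of "k-e"] q0[of "k+e"] r0[of k] te by (simp add: tot_add tot_diff)
      thus False using pk K0 by simp
    qed
    moreover have "k = m + e" if "tot k = s + 1"
    proof (rule ccontr)
      assume "k \<noteq> m + e"
      hence "k - e \<noteq> m" by auto
      hence "K * Poly_Mapping.lookup p k = 0"
        using L[of k] q1[of "k-e"] q0[of "k+e"] r0[of k] te that by (simp add: tot_add tot_diff)
      thus False using pk K0 by simp
    qed
    ultimately show ?thesis by auto
  qed
  show ?thesis using A B by blast
qed

definition dm :: "int \<Rightarrow> int \<Rightarrow> int \<Rightarrow> int \<times> int \<times> int" where
  "dm j1 j2 j3 = ((j1 + j2 - j3) div 2, (j1 - j2 + j3) div 2, (- j1 + j2 + j3) div 2)"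

lemma dm_eq: "j1 + j2 + j3 = 2 * h \<Longrightarrow> dm j1 j2 j3 = (h - j3, h - j2, h - j1)"
proof -
  assume a: "j1 + j2 + j3 = 2 * h"
  have e1: "j1 + j2 - j3 = 2 * (h - j3)" "j1 - j2 + j3 = 2 * (h - j2)" "- j1 + j2 + j3 = 2 * (h - j1)"
    using a by (simp_all add: algebra_simps)
  show ?thesis unfolding dm_def e1 by simp
qed

lemma rec12:
  assumes S: "schur_family phi" and adm: "admissible (j1-1) (j2-1) j3"
  shows "y12 * phi (j1-1) (j2-1) j3 = lconst (K 1 1 (j1-1) (j2-1) j3) * phi j1 j2 j3 +
     (lconst (K (-1) (-1) (j1-1) (j2-1) j3) * phi (j1-2) (j2-2) j3 +
      lconst (K (-1) 1 (j1-1) (j2-1) j3) * phi (j1-2) j2 j3 +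
      lconst (K 1 (-1) (j1-1) (j2-1) j3) * phi j1 (j2-2) j3)"
  using S adm unfolding schur_family_def by (simp add: algebra_simps)

lemma rec13:
  assumes S: "schur_family phi" and adm: "admissible (j1-1) j2 (j3-1)"
  shows "y13 * phi (j1-1) j2 (j3-1) = lconst (K 1 1 (j1-1) (j3-1) j2) * phi j1 j2 j3 +
     (lconst (K (-1) (-1) (j1-1) (j3-1) j2) * phi (j1-2) j2 (j3-2) +
      lconst (K (-1) 1 (j1-1) (j3-1) j2) * phi (j1-2) j2 j3 +
      lconst (K 1 (-1) (j1-1) (j3-1) j2) * phi j1 j2 (j3-2))"
  using S adm unfolding schur_family_def by (simp add: algebra_simps)

lemma rec23:
  assumes S: "schur_family phi" and adm: "admissible j1 (j2-1) (j3-1)"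
  shows "y23 * phi j1 (j2-1) (j3-1) = lconst (K 1 1 (j2-1) (j3-1) j1) * phi j1 j2 j3 +
     (lconst (K (-1) (-1) (j2-1) (j3-1) j1) * phi j1 (j2-2) (j3-2) +
      lconst (K (-1) 1 (j2-1) (j3-1) j1) * phi j1 (j2-2) j3 +
      lconst (K 1 (-1) (j2-1) (j3-1) j1) * phi j1 j2 (j3-2))"
  using S adm unfolding schur_family_def by (simp add: algebra_simps)

lemma Knz: "0 \<le> a \<Longrightarrow> 0 \<le> b \<Longrightarrow> 0 \<le> c \<Longrightarrow> c \<le> a + b \<Longrightarrow> K 1 1 a b c \<noteq> 0"
  unfolding K_def by (simp only: divide_eq_0_iff mult_eq_0_iff of_int_eq_0_iff de_Morgan_disj) simp

lemma case_step:
  fixes p q r1 r2 r3 :: lpoly and e m :: "int \<times> int \<times> int" and s :: int and K :: complex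
  assumes eq: "y * q = lconst K * p + (lconst c1 * r1 + lconst c2 * r2 + lconst c3 * r3)"
    and y: "y = Poly_Mapping.single e 1 + Poly_Mapping.single (-e) 1"
    and te: "tot e = 1" and K0: "K \<noteq> 0"
    and qm: "Poly_Mapping.lookup q m \<noteq> 0" and tm: "tot m = s"
    and qk: "\<forall>k\<in>Poly_Mapping.keys q. 2 * tot k \<le> 2 * s \<and> (2 * tot k = 2 * s \<longrightarrow> k = m)"
    and r1: "\<forall>k\<in>Poly_Mapping.keys r1. 2 * tot k \<le> 2 * s"
    and r2: "\<forall>k\<in>Poly_Mapping.keys r2. 2 * tot k \<le> 2 * s"
    and r3: "\<forall>k\<in>Poly_Mapping.keys r3. 2 * tot k \<le> 2 * s"
  shows "Poly_Mapping.lookup p (m + e) \<noteq> 0 \<and>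
    (\<forall>k\<in>Poly_Mapping.keys p. 2 * tot k \<le> 2 * (s + 1) \<and> (2 * tot k = 2 * (s + 1) \<longrightarrow> k = m + e))"
proof -
  let ?r = "lconst c1 * r1 + lconst c2 * r2 + lconst c3 * r3"
  have "Poly_Mapping.keys ?r \<subseteq> Poly_Mapping.keys r1 \<union> Poly_Mapping.keys r2 \<union> Poly_Mapping.keys r3"
  proof -
    have "Poly_Mapping.keys ?r \<subseteq> Poly_Mapping.keys (lconst c1 * r1 + lconst c2 * r2) \<union> Poly_Mapping.keys (lconst c3 * r3)"
      by (rule keys_add)
    also have "\<dots> \<subseteq> (Poly_Mapping.keys (lconst c1 * r1) \<union> Poly_Mapping.keys (lconst c2 * r2)) \<union> Poly_Mapping.keys r3"
      by (intro Un_mono keys_add keys_lconst_mult)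
    also have "\<dots> \<subseteq> Poly_Mapping.keys r1 \<union> Poly_Mapping.keys r2 \<union> Poly_Mapping.keys r3"
      by (intro Un_mono keys_lconst_mult order_refl)
    finally show ?thesis .
  qed
  hence rk: "\<forall>k\<in>Poly_Mapping.keys ?r. tot k \<le> s" using r1 r2 r3 by fastforce
  have qk': "\<forall>k\<in>Poly_Mapping.keys q. tot k \<le> s \<and> (tot k = s \<longrightarrow> k = m)" using qk by auto
  from stepG[OF te y eq qm tm qk' rk K0] show ?thesis by auto
qed

lemma ball_mono_le: "\<forall>k\<in>A. f k \<le> (x::int) \<Longrightarrow> x \<le> y \<Longrightarrow> \<forall>k\<in>A. f k \<le> y"
  by force

lemma main:
  assumes S: "schur_family phi"
  shows "admissible j1 j2 j3 \<Longrightarrow> nat (j1 + j2 + j3) = n \<Longrightarrow>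
    Poly_Mapping.lookup (phi j1 j2 j3) (dm j1 j2 j3) \<noteq> 0 \<and>
    (\<forall>k\<in>Poly_Mapping.keys (phi j1 j2 j3). 2 * tot k \<le> j1 + j2 + j3 \<and>
       (2 * tot k = j1 + j2 + j3 \<longrightarrow> k = dm j1 j2 j3))"
proof (induction n arbitrary: j1 j2 j3 rule: less_induct)
  case (less n)
  have bnd: "\<forall>k\<in>Poly_Mapping.keys (phi t1 t2 t3). 2 * tot k \<le> t1 + t2 + t3"
    if lt: "nat (t1 + t2 + t3) < n" for t1 t2 t3
  proof (cases "admissible t1 t2 t3")
    case True
    from less.IH[OF lt True refl] show ?thesis by blast
  next
    case False
    hence "phi t1 t2 t3 = 0" using S unfolding schur_family_def by blast
    thus ?thesis by simp
  qed
  have adm: "admissible j1 j2 j3" by fact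
  then obtain h where h: "j1 + j2 + j3 = 2 * h" unfolding admissible_def by (meson evenE)
  have dmj: "dm j1 j2 j3 = (h - j3, h - j2, h - j1)" using dm_eq[OF h] .
  have nn: "nat (j1 + j2 + j3) = n" by fact
  consider (z) "j1 = 0 \<and> j2 = 0 \<and> j3 = 0" | (c3) "j1 + j2 - j3 \<ge> 2" | (c2) "j1 - j2 + j3 \<ge> 2"
    | (c1) "- j1 + j2 + j3 \<ge> 2"
  proof -
    have f: "0 \<le> h - j3" "0 \<le> h - j2" "0 \<le> h - j1" using adm h by (auto simp: admissible_def abs_le_iff)
    have "h - j3 \<ge> 1 \<or> h - j2 \<ge> 1 \<or> h - j1 \<ge> 1 \<or> (j1 = 0 \<and> j2 = 0 \<and> j3 = 0)"
      using f h by linarith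
    thus ?thesis using h that by linarith
  qed
  then show ?case
  proof cases
    case z
    hence "phi j1 j2 j3 = 1" using S unfolding schur_family_def by simp
    moreover have "dm j1 j2 j3 = 0" using z by (simp add: dm_def zero_prod_def)
    ultimately show ?thesis using z by (simp add: tot_def lookup_one)
  next
    case c3
    have h': "(j1-1) + (j2-1) + j3 = 2 * (h - 1)" using h by simp
    have ev: "even ((j1-1) + (j2-1) + j3)" unfolding h' by simp
    have adm': "admissible (j1-1) (j2-1) j3" using adm c3 ev unfolding admissible_def abs_le_iff
      by (intro conjI) (assumption | linarith)+
    have IH: "Poly_Mapping.lookup (phi (j1-1) (j2-1) j3) (dm (j1-1) (j2-1) j3) \<noteq> 0 \<and>
      (\<forall>k\<in>Poly_Mapping.keys (phi (j1-1) (j2-1) j3). 2 * tot k \<le> (j1-1) + (j2-1) + j3 \<and>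
       (2 * tot k = (j1-1) + (j2-1) + j3 \<longrightarrow> k = dm (j1-1) (j2-1) j3))"
      by (rule less.IH[OF _ adm' refl]) (use nn c3 adm in \<open>auto simp: admissible_def\<close>)
    note dm' = dm_eq[OF h']
    have r1: "\<forall>k\<in>Poly_Mapping.keys (phi (j1-2) (j2-2) j3). 2 * tot k \<le> 2 * (h - 1)"
      by (rule ball_mono_le[OF bnd]) (use nn c3 h adm in \<open>auto simp: admissible_def\<close>)
    have r2: "\<forall>k\<in>Poly_Mapping.keys (phi (j1-2) j2 j3). 2 * tot k \<le> 2 * (h - 1)"
      by (rule ball_mono_le[OF bnd]) (use nn c3 h adm in \<open>auto simp: admissible_def\<close>)
    have r3: "\<forall>k\<in>Poly_Mapping.keys (phi j1 (j2-2) j3). 2 * tot k \<le> 2 * (h - 1)"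
      by (rule ball_mono_le[OF bnd]) (use nn c3 h adm in \<open>auto simp: admissible_def\<close>)
    have K0: "K 1 1 (j1-1) (j2-1) j3 \<noteq> 0" using adm' by (intro Knz) (auto simp: admissible_def)
    have y: "y12 = Poly_Mapping.single (1,0,0) 1 + Poly_Mapping.single (-(1,0,0)) 1"
      by (simp add: y12_def lmono_def)
    have tm: "tot (dm (j1-1) (j2-1) j3) = h - 1" unfolding dm' tot_def using h by simp
    have qk: "\<forall>k\<in>Poly_Mapping.keys (phi (j1-1) (j2-1) j3). 2 * tot k \<le> 2 * (h-1) \<and>
       (2 * tot k = 2 * (h-1) \<longrightarrow> k = dm (j1-1) (j2-1) j3)" unfolding h'[symmetric] using IH by blast
    have te: "tot (1,0,0) = 1" by (simp add: tot_def)
    note R = case_step[OF rec12[OF S adm'] y te K0 conjunct1[OF IH] tm qk r1 r2 r3]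
    have e: "dm (j1-1) (j2-1) j3 + (1,0,0) = dm j1 j2 j3" unfolding dm' dmj by simp
    show ?thesis using R e h by (simp add: tot_def)
  next
    case c2
    have h': "(j1-1) + j2 + (j3-1) = 2 * (h - 1)" using h by simp
    have ev: "even ((j1-1) + j2 + (j3-1))" unfolding h' by simp
    have adm': "admissible (j1-1) j2 (j3-1)" using adm c2 ev unfolding admissible_def abs_le_iff
      by (intro conjI) (assumption | linarith)+
    have IH: "Poly_Mapping.lookup (phi (j1-1) j2 (j3-1)) (dm (j1-1) j2 (j3-1)) \<noteq> 0 \<and>
      (\<forall>k\<in>Poly_Mapping.keys (phi (j1-1) j2 (j3-1)). 2 * tot k \<le> (j1-1) + j2 + (j3-1) \<and>
       (2 * tot k = (j1-1) + j2 + (j3-1) \<longrightarrow> k = dm (j1-1) j2 (j3-1)))"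
      by (rule less.IH[OF _ adm' refl]) (use nn c2 adm in \<open>auto simp: admissible_def\<close>)
    note dm' = dm_eq[OF h']
    have r1: "\<forall>k\<in>Poly_Mapping.keys (phi (j1-2) j2 (j3-2)). 2 * tot k \<le> 2 * (h - 1)"
      by (rule ball_mono_le[OF bnd]) (use nn c2 h adm in \<open>auto simp: admissible_def\<close>)
    have r2: "\<forall>k\<in>Poly_Mapping.keys (phi (j1-2) j2 j3). 2 * tot k \<le> 2 * (h - 1)"
      by (rule ball_mono_le[OF bnd]) (use nn c2 h adm in \<open>auto simp: admissible_def\<close>)
    have r3: "\<forall>k\<in>Poly_Mapping.keys (phi j1 j2 (j3-2)). 2 * tot k \<le> 2 * (h - 1)"
      by (rule ball_mono_le[OF bnd]) (use nn c2 h adm in \<open>auto simp: admissible_def\<close>)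
    have K0: "K 1 1 (j1-1) (j3-1) j2 \<noteq> 0" using adm' by (intro Knz) (auto simp: admissible_def)
    have y: "y13 = Poly_Mapping.single (0,1,0) 1 + Poly_Mapping.single (-(0,1,0)) 1"
      by (simp add: y13_def lmono_def)
    have tm: "tot (dm (j1-1) j2 (j3-1)) = h - 1" unfolding dm' tot_def using h by simp
    have qk: "\<forall>k\<in>Poly_Mapping.keys (phi (j1-1) j2 (j3-1)). 2 * tot k \<le> 2 * (h-1) \<and>
       (2 * tot k = 2 * (h-1) \<longrightarrow> k = dm (j1-1) j2 (j3-1))" unfolding h'[symmetric] using IH by blast
    have te: "tot (0,1,0) = 1" by (simp add: tot_def)
    note R = case_step[OF rec13[OF S adm'] y te K0 conjunct1[OF IH] tm qk r1 r2 r3]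
    have e: "dm (j1-1) j2 (j3-1) + (0,1,0) = dm j1 j2 j3" unfolding dm' dmj by simp
    show ?thesis using R e h by (simp add: tot_def)
  next
    case c1
    have h': "j1 + (j2-1) + (j3-1) = 2 * (h - 1)" using h by simp
    have ev: "even (j1 + (j2-1) + (j3-1))" unfolding h' by simp
    have adm': "admissible j1 (j2-1) (j3-1)" using adm c1 ev unfolding admissible_def abs_le_iff
      by (intro conjI) (assumption | linarith)+
    have IH: "Poly_Mapping.lookup (phi j1 (j2-1) (j3-1)) (dm j1 (j2-1) (j3-1)) \<noteq> 0 \<and>
      (\<forall>k\<in>Poly_Mapping.keys (phi j1 (j2-1) (j3-1)). 2 * tot k \<le> j1 + (j2-1) + (j3-1) \<and>
       (2 * tot k = j1 + (j2-1) + (j3-1) \<longrightarrow> k = dm j1 (j2-1) (j3-1)))"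
      by (rule less.IH[OF _ adm' refl]) (use nn c1 adm in \<open>auto simp: admissible_def\<close>)
    note dm' = dm_eq[OF h']
    have r1: "\<forall>k\<in>Poly_Mapping.keys (phi j1 (j2-2) (j3-2)). 2 * tot k \<le> 2 * (h - 1)"
      by (rule ball_mono_le[OF bnd]) (use nn c1 h adm in \<open>auto simp: admissible_def\<close>)
    have r2: "\<forall>k\<in>Poly_Mapping.keys (phi j1 (j2-2) j3). 2 * tot k \<le> 2 * (h - 1)"
      by (rule ball_mono_le[OF bnd]) (use nn c1 h adm in \<open>auto simp: admissible_def\<close>)
    have r3: "\<forall>k\<in>Poly_Mapping.keys (phi j1 j2 (j3-2)). 2 * tot k \<le> 2 * (h - 1)"
      by (rule ball_mono_le[OF bnd]) (use nn c1 h adm in \<open>auto simp: admissible_def\<close>)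
    have K0: "K 1 1 (j2-1) (j3-1) j1 \<noteq> 0" using adm' by (intro Knz) (auto simp: admissible_def)
    have y: "y23 = Poly_Mapping.single (0,0,1) 1 + Poly_Mapping.single (-(0,0,1)) 1"
      by (simp add: y23_def lmono_def)
    have tm: "tot (dm j1 (j2-1) (j3-1)) = h - 1" unfolding dm' tot_def using h by simp
    have qk: "\<forall>k\<in>Poly_Mapping.keys (phi j1 (j2-1) (j3-1)). 2 * tot k \<le> 2 * (h-1) \<and>
       (2 * tot k = 2 * (h-1) \<longrightarrow> k = dm j1 (j2-1) (j3-1))" unfolding h'[symmetric] using IH by blast
    have te: "tot (0,0,1) = 1" by (simp add: tot_def)
    note R = case_step[OF rec23[OF S adm'] y te K0 conjunct1[OF IH] tm qk r1 r2 r3]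
    have e: "dm j1 (j2-1) (j3-1) + (0,0,1) = dm j1 j2 j3" unfolding dm' dmj by simp
    show ?thesis using R e h by (simp add: tot_def)
  qed
qed

theorem mainTheorem5:
  fixes phi :: "int \<Rightarrow> int \<Rightarrow> int \<Rightarrow> lpoly"
    and j1 j2 j3 :: int
  assumes "schur_family phi"
    and "admissible j1 j2 j3"
  shows "Poly_Mapping.lookup (phi j1 j2 j3) ((j1 + j2 - j3) div 2, (j1 - j2 + j3) div 2, (- j1 + j2 + j3) div 2) \<noteq> 0
    \<and> (\<forall>a b c. (a, b, c) \<in> Poly_Mapping.keys (phi j1 j2 j3) \<longrightarrow>
          2 * (a + b + c) \<le> j1 + j2 + j3 \<and>
          (2 * (a + b + c) = j1 + j2 + j3 \<longrightarrow>
             (a, b, c) = ((j1 + j2 - j3) div 2, (j1 - j2 + j3) div 2, (- j1 + j2 + j3) div 2)))"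
proof -
  note M = main[OF assms(1) assms(2) refl]
  show ?thesis
  proof (intro conjI allI impI)
    show "Poly_Mapping.lookup (phi j1 j2 j3) ((j1 + j2 - j3) div 2, (j1 - j2 + j3) div 2, (- j1 + j2 + j3) div 2) \<noteq> 0"
      using M unfolding dm_def by blast
  next
    fix a b c assume k: "(a, b, c) \<in> Poly_Mapping.keys (phi j1 j2 j3)"
    from M k have "2 * tot (a, b, c) \<le> j1 + j2 + j3 \<and> (2 * tot (a, b, c) = j1 + j2 + j3 \<longrightarrow> (a, b, c) = dm j1 j2 j3)"
      by blast
    thus "2 * (a + b + c) \<le> j1 + j2 + j3"
      and "2 * (a + b + c) = j1 + j2 + j3 \<Longrightarrow>
             (a, b, c) = ((j1 + j2 - j3) div 2, (j1 - j2 + j3) div 2, (- j1 + j2 + j3) div 2)"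
      unfolding tot_def dm_def by auto
  qed
qed

end
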